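(* Let $(\vec u,\vec B)$ and $(\vec t,\vec C)$ be proper factorization patterns over $A$, and let $(v_n)_n$ and $(w_n)_n$ be sequences of words such that $(v_n)_n$ is $(\vec u,\vec B)$-adequate, $(w_n)_n$ is $(\vec t,\vec C)$-adequate, and $v_n\sim_n w_n$ for every $n\ge0$. Then $\vec u=\vec t$ and $\vec B=\vec C$.
   Context: $\mathrm{alph}(u)$ is the set of letters of $u$; for $B\subseteq A$, $B^{=}=\{w\in B^*:\mathrm{alph}(w)=B\}$. $u\lhd v$ means $u$ is a scattered subword of $v$; $\mathrm{Sub}_n(u)=\{w:|w|\le n,\ w\lhd u\}$; $u\sim_n v$ iff $\mathrm{Sub}_n(u)=\mathrm{Sub}_n(v)$. A factorization pattern is $(\vec u,\vec B)$ with $\vec u=(u_0,\dots,u_p)\in(A^* )^{p+1}$, $\vec B=(B_1,\dots,B_p)$ nonempty subsets of $A$. $L_n(\vec u,\vec B)=u_0(B_1^{=})^nu_1\cdots u_{p-1}(B_p^{=})^nu_p$; $(w_n)_n$ is $(\vec u,\vec B)$-adequate if $w_n\in L_n(\vec u,\vec B)$ for all $n$. A pattern is proper if: (1) for $1\le i\le p$ with $u_i\neq\varepsilon$, the first letter of $u_i$ is not in $B_i$, and for $0\le i\le p-1$ with $u_i\neq\varepsilon$, the last letter of $u_i$ is not in $B_{i+1}$; (2) for $1\le i\le p-1$ with $u_i=\varepsilon$, $B_i\not\subseteq B_{i+1}$ and $B_{i+1}\not\subseteq B_i$. *)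

theory Defs
  imports Main "HOL-Library.Sublist"
begin

definition full_words :: "'a set \<Rightarrow> 'a list set" where
  "full_words B = {w. set w = B}"

definition lang_pow :: "'a list set \<Rightarrow> nat \<Rightarrow> 'a list set" where
  "lang_pow L n = {concat ws | ws. length ws = n \<and> set ws \<subseteq> L}"

definition lang_conc :: "'a list set \<Rightarrow> 'a list set \<Rightarrow> 'a list set" where
  "lang_conc K L = {x @ y | x y. x \<in> K \<and> y \<in> L}"

text \<open>L_n(us,Bs) = u_0 (B_1^=)^n u_1 ... (B_p^=)^n u_p, with us = [u_0,...,u_p],
  Bs = [B_1,...,B_p].\<close>
fun Lpat :: "nat \<Rightarrow> 'a list list \<Rightarrow> 'a set list \<Rightarrow> 'a list set" where
  "Lpat n [u] [] = {u}"
| "Lpat n (u # us) (B # Bs) =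
     lang_conc {u} (lang_conc (lang_pow (full_words B) n) (Lpat n us Bs))"
| "Lpat n _ _ = {}"

definition adequate :: "'a list list \<Rightarrow> 'a set list \<Rightarrow> (nat \<Rightarrow> 'a list) \<Rightarrow> bool" where
  "adequate us Bs w \<longleftrightarrow> (\<forall>n. w n \<in> Lpat n us Bs)"

definition fact_pattern :: "'a set \<Rightarrow> 'a list list \<Rightarrow> 'a set list \<Rightarrow> bool" where
  "fact_pattern A us Bs \<longleftrightarrow> length us = length Bs + 1
     \<and> (\<forall>u\<in>set us. set u \<subseteq> A) \<and> (\<forall>B\<in>set Bs. B \<noteq> {} \<and> B \<subseteq> A)"

text \<open>Proper pattern (1-based indices of the paper: u_i = us!i, B_i = Bs!(i-1)).\<close>
definition proper :: "'a set \<Rightarrow> 'a list list \<Rightarrow> 'a set list \<Rightarrow> bool" where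
  "proper A us Bs \<longleftrightarrow> fact_pattern A us Bs
     \<and> (\<forall>i. 1 \<le> i \<and> i \<le> length Bs \<and> us ! i \<noteq> [] \<longrightarrow> hd (us ! i) \<notin> Bs ! (i - 1))
     \<and> (\<forall>i. i \<le> length Bs - 1 \<and> i < length Bs \<and> us ! i \<noteq> [] \<longrightarrow> last (us ! i) \<notin> Bs ! i)
     \<and> (\<forall>i. 1 \<le> i \<and> i \<le> length Bs - 1 \<and> us ! i = [] \<longrightarrow>
            \<not> Bs ! (i - 1) \<subseteq> Bs ! i \<and> \<not> Bs ! i \<subseteq> Bs ! (i - 1))"

definition Sub :: "nat \<Rightarrow> 'a list \<Rightarrow> 'a list set" where
  "Sub n u = {w. length w \<le> n \<and> subseq w u}"

definition simeq :: "nat \<Rightarrow> 'a list \<Rightarrow> 'a list \<Rightarrow> bool" where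
  "simeq n u v \<longleftrightarrow> Sub n u = Sub n v"

end

theory Submission
  imports Defs
begin



datatype 'a atom = L 'a | S "'a set"

fun inD :: "'a atom list \<Rightarrow> 'a list \<Rightarrow> bool" where
  "inD [] z \<longleftrightarrow> z = []"
| "inD (L a # P) z \<longleftrightarrow> inD P z \<or> (\<exists>z'. z = a # z' \<and> inD P z')"
| "inD (S B # P) z \<longleftrightarrow> (\<exists>y z'. z = y @ z' \<and> set y \<subseteq> B \<and> inD P z')"

lemma subseq_set: "subseq x y \<Longrightarrow> set x \<subseteq> set y"
  by (induction rule: list_emb.induct) auto

lemma down: "inD P z \<Longrightarrow> subseq y z \<Longrightarrow> inD P y"
proof (induction P arbitrary: y z)
  case Nil thus ?case by simp
next
  case (Cons x P)
  note IH = Cons.IH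
  note pr = Cons.prems
  show ?case
  proof (cases x)
    case (L a)
    from pr L have "inD P z \<or> (\<exists>z'. z = a # z' \<and> inD P z')" by simp
    then show ?thesis
    proof
      assume "inD P z" hence "inD P y" using IH[of z y] pr(2) by blast
      thus ?thesis using L by simp
    next
      assume "\<exists>z'. z = a # z' \<and> inD P z'"
      then obtain z' where z: "z = a # z'" "inD P z'" by blast
      show ?thesis
      proof (cases y)
        case Nil thus ?thesis using IH[of z' "[]"] z L by simp
      next
        case (Cons b y')
        show ?thesis
        proof (cases "b = a")
          case True
          with pr(2) z \<open>y = b # y'\<close> have "subseq y' z'" by simp
          hence "inD P y'" using IH[of z' y'] z(2) by blast
          thus ?thesis using L \<open>y = b # y'\<close> True by simp
        next
          case False
          with pr(2) z \<open>y = b # y'\<close> have "subseq y z'" by simp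
          hence "inD P y" using IH[of z' y] z(2) by blast
          thus ?thesis using L by simp
        qed
      qed
    qed
  next
    case (S B)
    from pr S obtain u z' where z: "z = u @ z'" "set u \<subseteq> B" "inD P z'" by auto
    from pr(2) z obtain y1 y2 where y: "y = y1 @ y2" "subseq y1 u" "subseq y2 z'"
      by (auto elim: subseq_appendE)
    have "set y1 \<subseteq> set u" using y(2) by (rule subseq_set)
    moreover have "inD P y2" using IH[of z' y2] y(3) z(3) by blast
    ultimately show ?thesis using y z S by auto
  qed
qed

lemma down1: "inD P (c # z) \<Longrightarrow> inD P z"
  by (erule down) (intro list_emb_Cons subseq_order.order_refl)

lemma R1: "c \<notin> B \<Longrightarrow> inD (S B # X) (c#z) \<longleftrightarrow> inD X (c#z)"
  by (auto simp: Cons_eq_append_conv) (metis append_Nil empty_subsetI set_empty)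

lemma R2: "c \<in> B \<Longrightarrow> inD (S B # X) (c#z) \<longleftrightarrow> inD (S B # X) z"
proof
  assume c: "c \<in> B" and h: "inD (S B # X) (c#z)"
  then obtain y z' where "c#z = y@z'" "set y \<subseteq> B" "inD X z'" by auto
  thus "inD (S B # X) z"
  proof (cases y)
    case Nil thus ?thesis using \<open>c#z = y@z'\<close> \<open>inD X z'\<close>
      by (metis append_Nil down1 empty_subsetI set_empty inD.simps(3))
  next
    case (Cons d y') thus ?thesis using \<open>c#z = y@z'\<close> \<open>inD X z'\<close> \<open>set y \<subseteq> B\<close> by auto
  qed
next
  assume c: "c \<in> B" and h: "inD (S B # X) z"
  then obtain y z' where "z = y@z'" "set y \<subseteq> B" "inD X z'" by auto
  thus "inD (S B # X) (c#z)" using c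
    by (simp only: inD.simps) (rule exI[of _ "c#y"], rule exI[of _ z'], auto)
qed

lemma R3: "inD (L a # X) (a#z) \<longleftrightarrow> inD X z"
  by (auto dest: down1)

lemma R4: "c \<noteq> a \<Longrightarrow> inD (L a # X) (c#z) \<longleftrightarrow> inD X (c#z)"
  by auto

lemma extS: "inD X z \<Longrightarrow> inD (S B # X) z"
  by (metis append_Nil empty_subsetI set_empty inD.simps(3))

lemma extL: "inD X z \<Longrightarrow> inD (L a # X) z"
  by auto

lemma prepS: "inD (S B # X) z \<Longrightarrow> set x \<subseteq> B \<Longrightarrow> inD (S B # X) (x @ z)"
  by (auto) (metis append.assoc le_sup_iff set_append)

lemma S_empty: "inD (S {} # X) z \<longleftrightarrow> inD X z"
  by auto

definition enum :: "'a set \<Rightarrow> 'a list" where "enum B = (SOME xs. set xs = B)"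

lemma set_enum: "finite B \<Longrightarrow> set (enum B) = B"
  unfolding enum_def by (rule someI_ex) (rule finite_list)

fun W :: "'a atom list \<Rightarrow> 'a list" where
  "W [] = []"
| "W (L a # P) = a # W P"
| "W (S B # P) = enum B @ W P"

fun okat :: "'a atom \<Rightarrow> bool" where
  "okat (L a) = True"
| "okat (S B) = (finite B \<and> B \<noteq> {})"

fun okpair :: "'a atom \<Rightarrow> 'a atom \<Rightarrow> bool" where
  "okpair (L a) (L b) = True"
| "okpair (L a) (S B) = (a \<notin> B)"
| "okpair (S B) (L a) = (a \<notin> B)"
| "okpair (S B) (S C) = (\<not> B \<subseteq> C \<and> \<not> C \<subseteq> B)"

fun red :: "'a atom list \<Rightarrow> bool" where
  "red [] = True"
| "red [x] = okat x"
| "red (x # y # P) = (okat x \<and> okpair x y \<and> red (y # P))"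

lemma red_Cons: "red (x # P) = (okat x \<and> red P \<and> (P \<noteq> [] \<longrightarrow> okpair x (hd P)))"
  by (cases P) auto

lemma W_in: "red P \<Longrightarrow> inD P (W P)"
proof (induction P)
  case Nil thus ?case by simp
next
  case (Cons x P) show ?case
  proof (cases x)
    case (L a) thus ?thesis using Cons by (auto simp: red_Cons)
  next
    case (S B)
    with Cons have "finite B" "inD P (W P)" by (auto simp: red_Cons)
    thus ?thesis using S
      by (simp only: inD.simps) (rule exI[of _ "enum B"], rule exI[of _ "W P"], auto simp: set_enum)
  qed
qed

lemma G: "red P \<Longrightarrow> inD P (x @ W P) \<Longrightarrow> x = [] \<or> (\<exists>B P'. P = S B # P' \<and> set x \<subseteq> B)"
proof (induction P arbitrary: x)
  case Nil thus ?case by simp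
next
  case (Cons at P)
  show ?case
  proof (cases at)
    case (L a)
    have bad: "\<not> inD P (x' @ [a] @ W P)" for x'
    proof
      assume "inD P (x' @ [a] @ W P)"
      hence "inD P ((x' @ [a]) @ W P)" by simp
      from Cons.IH[OF _ this] Cons.prems(1) L obtain B P' where "P = S B # P'" "a \<in> B"
        by (auto simp: red_Cons)
      with Cons.prems(1) L show False by (auto simp: red_Cons)
    qed
    from Cons.prems(2) L have "inD P (x @ a # W P) \<or> (\<exists>z'. x @ a # W P = a # z' \<and> inD P z')"
      by simp
    thus ?thesis
    proof
      assume "inD P (x @ a # W P)" thus ?thesis using bad[of x] by simp
    next
      assume "\<exists>z'. x @ a # W P = a # z' \<and> inD P z'"
      then obtain z' where z: "x @ a # W P = a # z'" "inD P z'" by blast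
      show ?thesis
      proof (cases x)
        case Nil thus ?thesis by simp
      next
        case (Cons c x') with z bad[of x'] show ?thesis by simp
      qed
    qed
  next
    case (S B)
    with Cons.prems have fB: "finite B" "B \<noteq> {}" by (auto simp: red_Cons)
    from Cons.prems(2) S obtain y z' where yz: "x @ enum B @ W P = y @ z'" "set y \<subseteq> B" "inD P z'"
      by auto
    show ?thesis
    proof (cases "length x \<le> length y")
      case True
      with yz(1) have "set x \<subseteq> set y"
        by (metis append_eq_append_conv_if set_take_subset take_all_iff
            take_append)
      thus ?thesis using yz S by auto
    next
      case False
      with yz(1) obtain x1 where x1: "x = y @ x1" "x1 \<noteq> []"
        by (metis append_eq_append_conv_if append_take_drop_id drop_eq_Nil
            linorder_not_less)
      with yz have "inD P ((x1 @ enum B) @ W P)" by simp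
      from Cons.IH[OF _ this] Cons.prems(1) x1 obtain C P' where "P = S C # P'" "B \<subseteq> C"
        using set_enum[OF fB(1)] by (auto simp: red_Cons)
      with Cons.prems(1) S show ?thesis by (auto simp: red_Cons)
    qed
  qed
qed



fun compat :: "'a set \<Rightarrow> 'a atom list \<Rightarrow> bool" where
  "compat B [] = True"
| "compat B (L a # _) = (a \<notin> B)"
| "compat B (S C # _) = (\<not> C \<subseteq> B)"

declare inD.simps[simp del]

lemma W_set_L: "a \<in> set (W (L a # Q))" by simp
lemma W_set_S: "finite C \<Longrightarrow> C \<subseteq> set (W (S C # Q))" by (simp add: set_enum)

lemma G_L: "red (L a # R) \<Longrightarrow> \<not> inD R (a # W R)"
proof
  assume r: "red (L a # R)" and h: "inD R (a # W R)"
  have "red R" using r by (simp add: red_Cons)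
  from G[OF this, of "[a]"] h obtain C R' where "R = S C # R'" "a \<in> C" by auto
  with r show False by (simp add: red_Cons)
qed

lemma G_S: "red (S C # R) \<Longrightarrow> \<not> inD R (enum C @ W R)"
proof
  assume r: "red (S C # R)" and h: "inD R (enum C @ W R)"
  have "red R" "finite C" "C \<noteq> {}" using r by (auto simp add: red_Cons)
  hence ne: "enum C \<noteq> []" by (metis set_enum set_empty)
  from G[OF \<open>red R\<close> h] ne obtain C' R' where "R = S C' # R'" "set (enum C) \<subseteq> C'" by auto
  with r set_enum[OF \<open>finite C\<close>] show False by (simp add: red_Cons)
qed

lemma nilcase:
  assumes "red Q" "compat B Q" "\<forall>z. inD (S B # []) z \<longleftrightarrow> inD (S B # Q) z"
  shows "Q = []"
proof (rule ccontr)
  assume "Q \<noteq> []"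
  then obtain at Q' where Q: "Q = at # Q'" by (cases Q) auto
  have "inD (S B # Q) (W Q)" using W_in[OF assms(1)] by (rule extS)
  hence "inD (S B # []) (W Q)" using assms(3) by (simp only:)
  hence sub: "set (W Q) \<subseteq> B" by (auto simp: inD.simps)
  show False
  proof (cases at)
    case (L a) thus False using sub assms(2) Q by auto
  next
    case (S C)
    hence "finite C" using assms(1) Q by (simp add: red_Cons)
    thus False using sub assms(2) Q S W_set_S[of C Q'] by auto
  qed
qed

lemma cross:
  assumes r1: "red (L a # R)" and r2: "red (S C # S')" and aB: "a \<notin> B" and CB: "\<not> C \<subseteq> B"
    and E: "\<forall>z. inD (S B # L a # R) z \<longleftrightarrow> inD (S B # S C # S') z"
  shows False
proof -
  have rR: "red R" using r1 by (simp add: red_Cons)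
  have WR: "inD R (W R)" by (rule W_in[OF rR])
  have "inD R (a # W R)"
  proof (cases "a \<in> C")
    case True
    have eq: "inD R z \<longleftrightarrow> inD (S C # S') z" for z
    proof -
      have "inD R z \<longleftrightarrow> inD (S B # L a # R) (a#z)" by (simp only: R1[OF aB] R3)
      also have "\<dots> \<longleftrightarrow> inD (S B # S C # S') (a#z)" by (rule E[rule_format])
      also have "\<dots> \<longleftrightarrow> inD (S C # S') z" by (simp only: R1[OF aB] R2[OF True])
      finally show ?thesis .
    qed
    have "inD (S C # S') (W R)" using WR by (simp only: eq)
    hence "inD (S C # S') (a # W R)" by (simp only: R2[OF True])
    thus ?thesis by (simp only: eq)
  next
    case False
    from CB obtain c where c: "c \<in> C" "c \<notin> B" by auto
    have incl: "inD (S C # S') z \<Longrightarrow> inD R z" for z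
    proof -
      assume "inD (S C # S') z"
      hence "inD (S C # S') (c#z)" by (simp only: R2[OF c(1)])
      hence "inD (S B # S C # S') (c#z)" by (simp only: R1[OF c(2)])
      hence "inD (S B # L a # R) (c#z)" by (simp only: E)
      hence "inD (L a # R) (c#z)" by (simp only: R1[OF c(2)])
      thus "inD R z"
        by (cases "c = a") (auto simp: R3 R4 dest: down1)
    qed
    have "inD (L a # R) (a # W R)" using WR by (simp only: R3)
    hence "inD (S B # L a # R) (a # W R)" by (rule extS)
    hence "inD (S B # S C # S') (a # W R)" by (simp only: E)
    hence "inD S' (a # W R)" by (simp only: R1[OF aB] R1[OF False])
    hence "inD (S C # S') (a # W R)" by (rule extS)
    thus ?thesis by (rule incl)
  qed
  thus False using G_L[OF r1] by blast
qed

lemma compat_empty: "red P \<Longrightarrow> compat {} P"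
proof (cases P)
  case (Cons x R) assume "red P" thus ?thesis using Cons by (cases x) (auto simp: red_Cons)
qed simp

lemma compat_tail: "red (S C # R) \<Longrightarrow> compat C R"
proof (cases R)
  case (Cons x R') assume "red (S C # R)" thus ?thesis using Cons by (cases x) (auto simp: red_Cons)
qed simp

lemma M:
  assumes "red P" "red Q" "compat B P" "compat B Q"
    "\<forall>z. inD (S B # P) z \<longleftrightarrow> inD (S B # Q) z"
  shows "P = Q"
  using assms
proof (induction P arbitrary: B Q)
  case Nil thus ?case using nilcase[of Q B] by simp
next
  case (Cons at R)
  note E = Cons.prems(5)
  have rR: "red R" using Cons.prems(1) by (simp add: red_Cons)
  show ?case
  proof (cases Q)
    case Nil
    have "\<forall>z. inD (S B # []) z \<longleftrightarrow> inD (S B # at # R) z" using E Nil by auto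
    hence "at # R = []" using nilcase[OF Cons.prems(1) Cons.prems(3)] by blast
    thus ?thesis by simp
  next
    case (Cons at' S')
    have rS: "red S'" using Cons.prems(2) Cons by (simp add: red_Cons)
    show ?thesis
    proof (cases at)
      case (L a)
      note aB = Cons.prems(3)[unfolded L, simplified]
      show ?thesis
      proof (cases at')
        case (L b)
        note bB = Cons.prems(4)[unfolded \<open>Q = at' # S'\<close> L, simplified]
        have e1: "inD R z \<longleftrightarrow> inD (L b # S') (a#z)" for z
        proof -
          have "inD R z \<longleftrightarrow> inD (S B # L a # R) (a#z)" by (simp only: R1[OF aB] R3)
          also have "\<dots> \<longleftrightarrow> inD (S B # L b # S') (a#z)" using E \<open>at = L a\<close> \<open>Q = at' # S'\<close> L by simp
          also have "\<dots> \<longleftrightarrow> inD (L b # S') (a#z)" by (simp only: R1[OF aB])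
          finally show ?thesis .
        qed
        have e2: "inD S' z \<longleftrightarrow> inD (L a # R) (b#z)" for z
        proof -
          have "inD S' z \<longleftrightarrow> inD (S B # L b # S') (b#z)" by (simp only: R1[OF bB] R3)
          also have "\<dots> \<longleftrightarrow> inD (S B # L a # R) (b#z)" using E \<open>at = L a\<close> \<open>Q = at' # S'\<close> L by simp
          also have "\<dots> \<longleftrightarrow> inD (L a # R) (b#z)" by (simp only: R1[OF bB])
          finally show ?thesis .
        qed
        show ?thesis
        proof (cases "a = b")
          case True
          have "\<forall>z. inD (S {} # R) z \<longleftrightarrow> inD (S {} # S') z"
            using e1 True by (simp only: R3 S_empty) simp
          hence "R = S'" using Cons.IH[OF rR rS compat_empty[OF rR] compat_empty[OF rS]] by blast
          thus ?thesis using True \<open>at = L a\<close> \<open>Q = at' # S'\<close> L by simp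
        next
          case False
          have "inD R (W R)" by (rule W_in[OF rR])
          hence "inD S' (a # W R)" by (simp only: e1 R4[OF False])
          hence "inD R (b # a # W R)" by (simp only: e2 R4[OF not_sym[OF False]])
          hence "inD R (a # W R)" by (rule down1)
          thus ?thesis using G_L[of a R] Cons.prems(1) \<open>at = L a\<close> by simp
        qed
      next
        case (S C)
        have "False"
        proof (rule cross[of a R C S' B])
          show "red (L a # R)" using Cons.prems(1) \<open>at = L a\<close> by simp
          show "red (S C # S')" using Cons.prems(2) \<open>Q = at' # S'\<close> S by simp
          show "a \<notin> B" by (rule aB)
          show "\<not> C \<subseteq> B" using Cons.prems(4) \<open>Q = at' # S'\<close> S by simp
          show "\<forall>z. inD (S B # L a # R) z \<longleftrightarrow> inD (S B # S C # S') z"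
            using E \<open>at = L a\<close> \<open>Q = at' # S'\<close> S by simp
        qed
        thus ?thesis ..
      qed
    next
      case (S C)
      show ?thesis
      proof (cases at')
        case (L a)
        have "False"
        proof (rule cross[of a S' C R B])
          show "red (L a # S')" using Cons.prems(2) \<open>Q = at' # S'\<close> L by simp
          show "red (S C # R)" using Cons.prems(1) \<open>at = S C\<close> by simp
          show "a \<notin> B" using Cons.prems(4) \<open>Q = at' # S'\<close> L by simp
          show "\<not> C \<subseteq> B" using Cons.prems(3) \<open>at = S C\<close> by simp
          have "\<forall>z. inD (S B # S C # R) z \<longleftrightarrow> inD (S B # L a # S') z"
            using E \<open>at = S C\<close> \<open>Q = at' # S'\<close> L by simp
          thus "\<forall>z. inD (S B # L a # S') z \<longleftrightarrow> inD (S B # S C # R) z" by auto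
        qed
        thus ?thesis ..
      next
        case (S C')
        let ?P = "S C # R" and ?Q = "S C' # S'"
        have CB: "\<not> C \<subseteq> B" using Cons.prems(3) \<open>at = S C\<close> by simp
        have C'B: "\<not> C' \<subseteq> B" using Cons.prems(4) \<open>Q = at' # S'\<close> S by simp
        have E': "\<forall>z. inD (S B # ?P) z \<longleftrightarrow> inD (S B # ?Q) z" using E \<open>at = S C\<close> \<open>Q = at' # S'\<close> S by simp
        have rP: "red ?P" using Cons.prems(1) \<open>at = S C\<close> by simp
        have rQ: "red ?Q" using Cons.prems(2) \<open>Q = at' # S'\<close> S by simp
        have DPQ: "\<forall>z. inD ?P z \<longleftrightarrow> inD ?Q z"
        proof -
          from CB obtain c where c: "c \<in> C" "c \<notin> B" by auto
          from C'B obtain c' where c': "c' \<in> C'" "c' \<notin> B" by auto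
          have ec: "inD ?P z \<longleftrightarrow> inD ?Q (c#z)" for z
          proof -
            have "inD ?P z \<longleftrightarrow> inD (S B # ?P) (c#z)" by (simp only: R1[OF c(2)] R2[OF c(1)])
            also have "\<dots> \<longleftrightarrow> inD ?Q (c#z)" by (rule trans[OF E'[rule_format] R1[OF c(2)]])
            finally show ?thesis .
          qed
          have ec': "inD ?Q z \<longleftrightarrow> inD ?P (c'#z)" for z
          proof -
            have "inD ?Q z \<longleftrightarrow> inD (S B # ?Q) (c'#z)" by (simp only: R1[OF c'(2)] R2[OF c'(1)])
            also have "\<dots> \<longleftrightarrow> inD ?P (c'#z)" by (rule trans[OF E'[rule_format, symmetric] R1[OF c'(2)]])
            finally show ?thesis .
          qed
          show ?thesis
          proof (cases "c \<in> C'")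
            case True
            thus ?thesis using ec R2[OF True] by simp
          next
            case False
            show ?thesis
            proof (cases "c' \<in> C")
              case True
              thus ?thesis using ec' R2[OF True] by simp
            next
              case False2: False
              have ecS: "inD ?P z \<longleftrightarrow> inD S' (c#z)" for z by (simp only: ec R1[OF False])
              have ecR: "inD ?Q z \<longleftrightarrow> inD R (c'#z)" for z by (simp only: ec' R1[OF False2])
              have PR: "inD ?P z \<longleftrightarrow> inD R z" for z
              proof
                assume "inD ?P z"
                hence "inD S' (c#z)" by (simp only: ecS)
                hence "inD ?Q (c#z)" by (rule extS)
                hence "inD R (c'#c#z)" by (simp only: ecR)
                thus "inD R z" by (rule down1[OF down1])
              next
                assume "inD R z" thus "inD ?P z" by (rule extS)
              qed
              have "inD R (W R)" by (rule W_in[OF rR])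
              hence "inD ?P (W R)" by (simp only: PR)
              hence "inD ?P (enum C @ W R)"
                using prepS[of C R "W R" "enum C"] set_enum rP by (auto simp: red_Cons)
              hence "inD R (enum C @ W R)" by (simp only: PR)
              thus ?thesis using G_S[OF rP] by blast
            qed
          qed
        qed
        have CC: "C = C'"
        proof -
          have sub: "C1 \<subseteq> C2" if r1: "red (S C1 # X)" and r2: "red (S C2 # Y)"
            and D: "\<forall>z. inD (S C1 # X) z \<longleftrightarrow> inD (S C2 # Y) z" for C1 C2 X Y
          proof
            fix c assume "c \<in> C1"
            have "inD (S C2 # Y) (W (S C2 # Y))" by (rule W_in[OF r2])
            hence "inD (S C1 # X) (W (S C2 # Y))" by (simp only: D)
            hence "inD (S C1 # X) (c # W (S C2 # Y))" by (simp only: R2[OF \<open>c \<in> C1\<close>])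
            hence "inD (S C2 # Y) (c # W (S C2 # Y))" by (simp only: D)
            hence "inD (S C2 # Y) ([c] @ W (S C2 # Y))" by simp
            from G[OF r2 this] show "c \<in> C2" by simp
          qed
          have "\<forall>z. inD ?Q z \<longleftrightarrow> inD ?P z" using DPQ by auto
          thus ?thesis using sub[OF rP rQ DPQ] sub[OF rQ rP] by blast
        qed
        have cS: "compat C S'" using compat_tail[OF rQ] CC by simp
        have DD: "\<forall>z. inD (S C # R) z \<longleftrightarrow> inD (S C # S') z" using DPQ CC by simp
        have "R = S'"
          using Cons.IH[OF rR rS compat_tail[OF rP] cS DD] .
        thus ?thesis using CC \<open>at = S C\<close> \<open>Q = at' # S'\<close> S by simp
      qed
    qed
  qed
qed



fun atoms :: "'a list list \<Rightarrow> 'a set list \<Rightarrow> 'a atom list" where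
  "atoms [u] [] = map L u"
| "atoms (u # us) (B # Bs) = map L u @ S B # atoms us Bs"
| "atoms _ _ = []"

lemma inD_mapL: "inD (map L u @ P) z \<longleftrightarrow> (\<exists>z0 z1. z = z0 @ z1 \<and> subseq z0 u \<and> inD P z1)"
proof (induction u arbitrary: z)
  case Nil thus ?case by (auto dest: list_emb_Nil2)
next
  case (Cons a u)
  show ?case
  proof
    assume "inD (map L (a # u) @ P) z"
    hence "inD (map L u @ P) z \<or> (\<exists>z'. z = a # z' \<and> inD (map L u @ P) z')"
      by (simp add: inD.simps)
    thus "\<exists>z0 z1. z = z0 @ z1 \<and> subseq z0 (a # u) \<and> inD P z1"
    proof
      assume "inD (map L u @ P) z"
      then obtain z0 z1 where "z = z0 @ z1" "subseq z0 u" "inD P z1" using Cons.IH by blast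
      thus ?thesis by (intro exI[of _ z0] exI[of _ z1]) auto
    next
      assume "\<exists>z'. z = a # z' \<and> inD (map L u @ P) z'"
      then obtain z' where "z = a # z'" "inD (map L u @ P) z'" by blast
      then obtain z0 z1 where "z = (a # z0) @ z1" "subseq z0 u" "inD P z1" using Cons.IH by auto
      thus ?thesis by (intro exI[of _ "a # z0"] exI[of _ z1]) auto
    qed
  next
    assume "\<exists>z0 z1. z = z0 @ z1 \<and> subseq z0 (a # u) \<and> inD P z1"
    then obtain z0 z1 where h: "z = z0 @ z1" "subseq z0 (a # u)" "inD P z1" by blast
    show "inD (map L (a # u) @ P) z"
    proof (cases "z0 \<noteq> [] \<and> hd z0 = a")
      case True
      then obtain z0' where z0: "z0 = a # z0'" by (cases z0) auto
      with h have "subseq z0' u" by simp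
      hence "inD (map L u @ P) (z0' @ z1)" using Cons.IH h by blast
      thus ?thesis using h z0 by (simp add: inD.simps)
    next
      case False
      hence "subseq z0 u" using h(2) by (cases z0) auto
      hence "inD (map L u @ P) z" using Cons.IH h by blast
      thus ?thesis by (simp add: inD.simps)
    qed
  qed
qed

lemma full_subseq:
  "length ws = n \<Longrightarrow> set ws \<subseteq> full_words B \<Longrightarrow> length y \<le> n \<Longrightarrow> set y \<subseteq> B
   \<Longrightarrow> subseq y (concat ws)"
proof (induction y arbitrary: ws n)
  case Nil thus ?case by simp
next
  case (Cons c y)
  then obtain w ws' n' where ws: "ws = w # ws'" "n = Suc n'" by (cases ws) auto
  with Cons.prems have "c \<in> set w" by (auto simp: full_words_def)
  hence "subseq [c] w" by (simp add: subseq_singleton_left)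
  moreover have "subseq y (concat ws')" using Cons.IH[of ws' n'] Cons.prems ws by auto
  ultimately have "subseq ([c] @ y) (w @ concat ws')" by (rule list_emb_append_mono)
  thus ?case using ws by simp
qed

lemma concat_full: "set ws \<subseteq> full_words B \<Longrightarrow> set (concat ws) \<subseteq> B"
  by (auto simp: full_words_def)

lemma conn:
  "length us = length Bs + 1 \<Longrightarrow> v \<in> Lpat n us Bs \<Longrightarrow> length z \<le> n
   \<Longrightarrow> subseq z v \<longleftrightarrow> inD (atoms us Bs) z"
proof (induction Bs arbitrary: us v z)
  case Nil
  then obtain u where u: "us = [u]" by (cases us) auto
  with Nil have v: "v = u" by simp
  have "inD (map L u @ []) z \<longleftrightarrow> subseq z u" using inD_mapL[of u "[]" z] by (simp add: inD.simps)
  thus ?case using u v by simp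
next
  case (Cons B Bs)
  then obtain u us' where u: "us = u # us'" "length us' = length Bs + 1" by (cases us) auto
  with Cons.prems(2) obtain ws v' where v: "v = u @ concat ws @ v'" "length ws = n"
    "set ws \<subseteq> full_words B" "v' \<in> Lpat n us' Bs"
    by (auto simp: lang_conc_def lang_pow_def)
  have at: "atoms us (B # Bs) = map L u @ S B # atoms us' Bs" using u by simp
  show ?case
  proof
    assume "subseq z v"
    then obtain z0 z2 where z: "z = z0 @ z2" "subseq z0 u" "subseq z2 (concat ws @ v')"
      using v(1) by (auto elim: subseq_appendE)
    then obtain y z1 where y: "z2 = y @ z1" "subseq y (concat ws)" "subseq z1 v'"
      by (auto elim: subseq_appendE)
    have "set y \<subseteq> B" using subseq_set[OF y(2)] concat_full[OF v(3)] by blast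
    moreover have "inD (atoms us' Bs) z1"
      using Cons.IH[OF u(2) v(4)] y(3) z(1) y(1) Cons.prems(3) by simp
    ultimately have "inD (S B # atoms us' Bs) z2" using y(1) by (auto simp: inD.simps)
    thus "inD (atoms us (B # Bs)) z" unfolding at inD_mapL using z by blast
  next
    assume "inD (atoms us (B # Bs)) z"
    then obtain z0 z2 where z: "z = z0 @ z2" "subseq z0 u" "inD (S B # atoms us' Bs) z2"
      unfolding at inD_mapL by blast
    then obtain y z1 where y: "z2 = y @ z1" "set y \<subseteq> B" "inD (atoms us' Bs) z1"
      by (auto simp: inD.simps)
    have "subseq y (concat ws)"
      using full_subseq[OF v(2) v(3) _ y(2)] Cons.prems(3) z(1) y(1) by simp
    moreover have "subseq z1 v'"
      using Cons.IH[OF u(2) v(4)] y(3) z(1) y(1) Cons.prems(3) by simp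
    ultimately have "subseq z2 (concat ws @ v')" using y(1) by (simp add: list_emb_append_mono)
    thus "subseq z v" using z v(1) by (simp add: list_emb_append_mono)
  qed
qed



definition pc :: "'a list list \<Rightarrow> 'a set list \<Rightarrow> bool" where
  "pc us Bs \<longleftrightarrow>
       (\<forall>i. 1 \<le> i \<and> i \<le> length Bs \<and> us ! i \<noteq> [] \<longrightarrow> hd (us ! i) \<notin> Bs ! (i - 1))
     \<and> (\<forall>i. i \<le> length Bs - 1 \<and> i < length Bs \<and> us ! i \<noteq> [] \<longrightarrow> last (us ! i) \<notin> Bs ! i)
     \<and> (\<forall>i. 1 \<le> i \<and> i \<le> length Bs - 1 \<and> us ! i = [] \<longrightarrow>
            \<not> Bs ! (i - 1) \<subseteq> Bs ! i \<and> \<not> Bs ! i \<subseteq> Bs ! (i - 1))"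

lemma proper_pc: "proper A us Bs \<longleftrightarrow> fact_pattern A us Bs \<and> pc us Bs"
  unfolding proper_def pc_def by blast

lemma pc_tail: assumes "pc (u # us) (B # Bs)" shows "pc us Bs"
  unfolding pc_def
proof (intro conjI allI impI)
  fix i assume h: "1 \<le> i \<and> i \<le> length Bs \<and> us ! i \<noteq> []"
  have "1 \<le> Suc i \<and> Suc i \<le> length (B # Bs) \<and> (u # us) ! Suc i \<noteq> []" using h by simp
  hence "hd ((u # us) ! Suc i) \<notin> (B # Bs) ! (Suc i - 1)" using assms unfolding pc_def by blast
  moreover have "(B # Bs) ! (Suc i - 1) = Bs ! (i - 1)" using h by (cases i) auto
  ultimately show "hd (us ! i) \<notin> Bs ! (i - 1)" by simp
next
  fix i assume h: "i \<le> length Bs - 1 \<and> i < length Bs \<and> us ! i \<noteq> []"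
  have "Suc i \<le> length (B # Bs) - 1 \<and> Suc i < length (B # Bs) \<and> (u # us) ! Suc i \<noteq> []" using h by simp
  hence "last ((u # us) ! Suc i) \<notin> (B # Bs) ! Suc i" using assms unfolding pc_def by blast
  thus "last (us ! i) \<notin> Bs ! i" by simp
next
  fix i assume h: "1 \<le> i \<and> i \<le> length Bs - 1 \<and> us ! i = []"
  have "1 \<le> Suc i \<and> Suc i \<le> length (B # Bs) - 1 \<and> (u # us) ! Suc i = []" using h by auto
  hence "\<not> (B # Bs) ! (Suc i - 1) \<subseteq> (B # Bs) ! Suc i \<and> \<not> (B # Bs) ! Suc i \<subseteq> (B # Bs) ! (Suc i - 1)"
    using assms unfolding pc_def by blast
  moreover have "(B # Bs) ! (Suc i - 1) = Bs ! (i - 1)" using h by (cases i) auto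
  ultimately show "\<not> Bs ! (i - 1) \<subseteq> Bs ! i" "\<not> Bs ! i \<subseteq> Bs ! (i - 1)" by auto
qed

lemma pc_head1: "pc (u # us) (B # Bs) \<Longrightarrow> u \<noteq> [] \<Longrightarrow> last u \<notin> B"
  unfolding pc_def by (metis (no_types, lifting) le0 length_Cons nth_Cons_0 zero_less_Suc)

lemma pc_head2: "pc (u # u' # us) (B # Bs) \<Longrightarrow> u' \<noteq> [] \<Longrightarrow> hd u' \<notin> B"
proof -
  assume "pc (u # u' # us) (B # Bs)" "u' \<noteq> []"
  hence "1 \<le> (1::nat) \<and> 1 \<le> length (B # Bs) \<and> (u # u' # us) ! 1 \<noteq> [] \<longrightarrow>
     hd ((u # u' # us) ! 1) \<notin> (B # Bs) ! (1 - 1)" unfolding pc_def by blast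
  with \<open>u' \<noteq> []\<close> show ?thesis by simp
qed

lemma pc_head3: "pc (u # [] # us) (B # B' # Bs) \<Longrightarrow> \<not> B \<subseteq> B' \<and> \<not> B' \<subseteq> B"
proof -
  assume "pc (u # [] # us) (B # B' # Bs)"
  hence "1 \<le> (1::nat) \<and> 1 \<le> length (B # B' # Bs) - 1 \<and> (u # [] # us) ! 1 = [] \<longrightarrow>
     \<not> (B # B' # Bs) ! (1 - 1) \<subseteq> (B # B' # Bs) ! 1 \<and> \<not> (B # B' # Bs) ! 1 \<subseteq> (B # B' # Bs) ! (1 - 1)"
    unfolding pc_def by blast
  thus ?thesis by simp
qed

lemma red_app_mapL: "red X \<Longrightarrow> (u \<noteq> [] \<and> X \<noteq> [] \<longrightarrow> okpair (L (last u)) (hd X)) \<Longrightarrow> red (map L u @ X)"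
proof (induction u)
  case Nil thus ?case by simp
next
  case (Cons a u)
  have r: "red (map L u @ X)" using Cons by (cases u) auto
  show ?case
  proof (cases u)
    case Nil thus ?thesis using Cons.prems by (simp add: red_Cons)
  next
    case (Cons b u') thus ?thesis using r by (simp add: red_Cons)
  qed
qed

lemma red_atoms:
  "length us = length Bs + 1 \<Longrightarrow> pc us Bs \<Longrightarrow> \<forall>B\<in>set Bs. finite B \<and> B \<noteq> {} \<Longrightarrow> red (atoms us Bs)"
proof (induction Bs arbitrary: us)
  case Nil
  then obtain u where "us = [u]" by (cases us) auto
  thus ?case using red_app_mapL[of "[]" u] by simp
next
  case (Cons B Bs)
  then obtain u u' us'' where u: "us = u # u' # us''" by (cases us; cases "tl us") auto
  have rt: "red (atoms (u' # us'') Bs)"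
    using Cons.IH[of "u' # us''"] Cons.prems pc_tail u by auto
  have rS: "red (S B # atoms (u' # us'') Bs)"
    unfolding red_Cons
  proof (intro conjI impI)
    show "okat (S B)" using Cons.prems by simp
    show "red (atoms (u' # us'') Bs)" by (rule rt)
    assume ne: "atoms (u' # us'') Bs \<noteq> []"
    show "okpair (S B) (hd (atoms (u' # us'') Bs))"
    proof (cases u')
      case UC: (Cons c u2)
      have "hd u' \<notin> B" using pc_head2[of u u' us'' B Bs] Cons.prems u UC by simp
      thus ?thesis using UC Cons.prems(1) u by (cases Bs; cases us'') auto
    next
      case UN: Nil
      show ?thesis
      proof (cases Bs)
        case Nil2: Nil
        with Cons.prems u have "us'' = []" by simp
        with ne UN Nil2 show ?thesis by simp
      next
        case BC: (Cons B' Bs')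
        then obtain u3 us3 where "us'' = u3 # us3" using Cons.prems u by (cases us'') auto
        thus ?thesis using pc_head3[of u us'' B B' Bs'] Cons.prems u UN BC by simp
      qed
    qed
  qed
  have "red (map L u @ S B # atoms (u' # us'') Bs)"
    using red_app_mapL[OF rS] pc_head1[of u "u' # us''" B Bs] Cons.prems u by simp
  thus ?case using u by simp
qed

lemma mapL_inj:
  "map L u @ X = map L t @ Y \<Longrightarrow> (X = [] \<or> (\<exists>B X'. X = S B # X')) \<Longrightarrow> (Y = [] \<or> (\<exists>B Y'. Y = S B # Y'))
   \<Longrightarrow> u = t \<and> X = Y"
proof (induction u arbitrary: t)
  case Nil thus ?case by (cases t) auto
next
  case (Cons a u) thus ?case by (cases t) auto
qed

lemma atoms_inj:
  "length us = length Bs + 1 \<Longrightarrow> length ts = length Cs + 1 \<Longrightarrow> atoms us Bs = atoms ts Cs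
   \<Longrightarrow> us = ts \<and> Bs = Cs"
proof (induction Bs arbitrary: us ts Cs)
  case Nil
  then obtain u where u: "us = [u]" by (cases us) auto
  show ?case
  proof (cases Cs)
    case Nil2: Nil
    then obtain t where "ts = [t]" using Nil by (cases ts) auto
    thus ?thesis using Nil Nil2 u by (simp add: inj_map_eq_map inj_def)
  next
    case (Cons C Cs')
    then obtain t ts' where t: "ts = t # ts'" using Nil by (cases ts) auto
    have "map L u @ [] = map L t @ S C # atoms ts' Cs'" using Nil u t Cons by simp
    from mapL_inj[OF this] show ?thesis by simp
  qed
next
  case (Cons B Bs)
  then obtain u us' where u: "us = u # us'" by (cases us) auto
  show ?case
  proof (cases Cs)
    case Nil
    then obtain t where t: "ts = [t]" using Cons by (cases ts) auto
    have "map L u @ S B # atoms us' Bs = map L t @ []" using Cons u t Nil by simp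
    from mapL_inj[OF this] show ?thesis by simp
  next
    case CC: (Cons C Cs')
    then obtain t ts' where t: "ts = t # ts'" using Cons.prems by (cases ts) auto
    have "map L u @ S B # atoms us' Bs = map L t @ S C # atoms ts' Cs'"
      using Cons.prems u t CC by simp
    from mapL_inj[OF this] have "u = t" "B = C" "atoms us' Bs = atoms ts' Cs'" by auto
    moreover have "us' = ts' \<and> Bs = Cs'"
      using Cons.IH[of us' ts' Cs'] Cons.prems u t CC calculation by simp
    ultimately show ?thesis using u t CC by simp
  qed
qed

theorem lemma4:
  fixes A :: "'a set"
    and us ts :: "'a list list" and Bs Cs :: "'a set list"
    and v w :: "nat \<Rightarrow> 'a list"
  assumes "finite A"
    and "proper A us Bs" and "proper A ts Cs"
    and "adequate us Bs v" and "adequate ts Cs w"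
    and "\<forall>n. simeq n (v n) (w n)"
  shows "us = ts \<and> Bs = Cs"
proof -
  have fp1: "fact_pattern A us Bs" and pc1: "pc us Bs" using assms(2) proper_pc by blast+
  have fp2: "fact_pattern A ts Cs" and pc2: "pc ts Cs" using assms(3) proper_pc by blast+
  have l1: "length us = length Bs + 1" using fp1 unfolding fact_pattern_def by blast
  have l2: "length ts = length Cs + 1" using fp2 unfolding fact_pattern_def by blast
  have f1: "\<forall>B\<in>set Bs. finite B \<and> B \<noteq> {}"
  proof
    fix B assume "B \<in> set Bs"
    hence "B \<noteq> {} \<and> B \<subseteq> A" using fp1 unfolding fact_pattern_def by blast
    thus "finite B \<and> B \<noteq> {}" using assms(1) finite_subset by blast
  qed
  have f2: "\<forall>B\<in>set Cs. finite B \<and> B \<noteq> {}"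
  proof
    fix B assume "B \<in> set Cs"
    hence "B \<noteq> {} \<and> B \<subseteq> A" using fp2 unfolding fact_pattern_def by blast
    thus "finite B \<and> B \<noteq> {}" using assms(1) finite_subset by blast
  qed
  have r1: "red (atoms us Bs)" by (rule red_atoms[OF l1 pc1 f1])
  have r2: "red (atoms ts Cs)" by (rule red_atoms[OF l2 pc2 f2])
  have D: "inD (atoms us Bs) z \<longleftrightarrow> inD (atoms ts Cs) z" for z
  proof -
    let ?n = "length z"
    have v: "v ?n \<in> Lpat ?n us Bs" using assms(4) unfolding adequate_def by blast
    have w: "w ?n \<in> Lpat ?n ts Cs" using assms(5) unfolding adequate_def by blast
    have "Sub ?n (v ?n) = Sub ?n (w ?n)" using assms(6) unfolding simeq_def by blast
    hence "z \<in> Sub ?n (v ?n) \<longleftrightarrow> z \<in> Sub ?n (w ?n)" by simp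
    hence "subseq z (v ?n) \<longleftrightarrow> subseq z (w ?n)" unfolding Sub_def by simp
    moreover have "subseq z (v ?n) \<longleftrightarrow> inD (atoms us Bs) z" by (rule conn[OF l1 v]) simp
    moreover have "subseq z (w ?n) \<longleftrightarrow> inD (atoms ts Cs) z" by (rule conn[OF l2 w]) simp
    ultimately show ?thesis by simp
  qed
  have "\<forall>z. inD (S {} # atoms us Bs) z \<longleftrightarrow> inD (S {} # atoms ts Cs) z"
    using D by (simp only: S_empty) (rule allI, rule refl)
  hence "atoms us Bs = atoms ts Cs"
    by (rule M[OF r1 r2 compat_empty[OF r1] compat_empty[OF r2]])
  thus ?thesis using atoms_inj[OF l1 l2] by blast
qed


end
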